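(* Let $A=(a_{ij})$ be a real $n\times n$ matrix with nonnegative entries, $\mathbf 1=(1,\ldots,1)^{\mathrm T}$, $L=\operatorname{diag}(A\mathbf 1)-A$, and let $\tau$ satisfy $0<\tau\le\bigl(\max_i\sum_{j\neq i}a_{ij}\bigr)^{-1}$. Let $S$ be the orthogonal projection of $\mathbb R^n$ onto $\mathcal R(L)\oplus\operatorname{span}(\mathbf 1)$, define $\widetilde L=\tau^{-1}(I-S)+LS$, and let $\tilde J$ be the eigenprojection of $L$ corresponding to the eigenvalue $0$. If $x(t)$ is a solution of $\dot x(t)=-\widetilde L\,x(t)$, then $\lim_{t\to\infty}x(t)=\tilde J S\,x(0)$.
   Context: $\mathcal R(M)$ and $\mathcal N(M)$ denote range and null space of a matrix $M$. The index $\operatorname{ind}M$ is the smallest $k\ge0$ with $\operatorname{rank}M^{k+1}=\operatorname{rank}M^k$. The eigenprojection of $M$ corresponding to the eigenvalue $0$ is the idempotent matrix $Z$ with $\mathcal R(Z)=\mathcal N(M^{\nu})$ and $\mathcal N(Z)=\mathcal R(M^{\nu})$, where $\nu=\operatorname{ind}M$. *)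

theory Defs
  imports "HOL-Analysis.Analysis"
begin

primrec mat_pow :: "real^'n^'n \<Rightarrow> nat \<Rightarrow> real^'n^'n" where
  "mat_pow M 0 = mat 1"
| "mat_pow M (Suc k) = M ** mat_pow M k"

definition mat_range :: "real^'n^'m \<Rightarrow> (real^'m) set" where
  "mat_range M = range (\<lambda>x. M *v x)"

definition mat_null :: "real^'n^'m \<Rightarrow> (real^'n) set" where
  "mat_null M = {x. M *v x = 0}"

definition mat_index :: "real^'n^'n \<Rightarrow> nat" where
  "mat_index M = (LEAST k. rank (mat_pow M (Suc k)) = rank (mat_pow M k))"

definition is_eigenprojection_zero :: "real^'n^'n \<Rightarrow> real^'n^'n \<Rightarrow> bool" where
  "is_eigenprojection_zero M Z \<longleftrightarrow>
     Z ** Z = Z \<and>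
     mat_range Z = mat_null (mat_pow M (mat_index M)) \<and>
     mat_null Z = mat_range (mat_pow M (mat_index M))"

definition is_orth_proj :: "real^'n^'n \<Rightarrow> (real^'n) set \<Rightarrow> bool" where
  "is_orth_proj S V \<longleftrightarrow> S ** S = S \<and> transpose S = S \<and> mat_range S = V"

definition ones :: "real^'n" where
  "ones = (\<chi> i. 1)"

definition laplacian :: "real^'n^'n \<Rightarrow> real^'n^'n" where
  "laplacian A = (\<chi> i j. (if i = j then (\<Sum>k\<in>UNIV. A$i$k) else 0) - A$i$j)"

end

theory Submission
  imports Defs "Jordan_Normal_Form.Spectral_Radius"
begin

no_notation Matrix.vec_index (infixl \<open>$\<close> 100)
no_notation Matrix.scalar_prod (infix \<open>\<bullet>\<close> 70)
hide_const (open) Matrix.mat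


lemma lap_sum:
  fixes z :: "'n::finite \<Rightarrow> 'a::real_algebra_1" and A :: "real^'n^'n"
  shows "(\<Sum>j\<in>UNIV. of_real (laplacian A $ i $ j) * z j)
       = of_real (\<Sum>j\<in>UNIV-{i}. A$i$j) * z i - (\<Sum>j\<in>UNIV-{i}. of_real (A$i$j) * z j)"
proof -
  have "(\<Sum>j\<in>UNIV. of_real (laplacian A $ i $ j) * z j)
      = (\<Sum>j\<in>UNIV. (if i = j then of_real (\<Sum>k\<in>UNIV. A$i$k) * z j else 0) - of_real (A$i$j) * z j)"
    by (rule sum.cong) (auto simp: laplacian_def algebra_simps)
  also have "\<dots> = of_real (\<Sum>k\<in>UNIV. A$i$k) * z i - (\<Sum>j\<in>UNIV. of_real (A$i$j) * z j)"
    by (simp add: sum_subtractf)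
  also have "(\<Sum>k\<in>UNIV. A$i$k) = A$i$i + (\<Sum>k\<in>UNIV-{i}. A$i$k)"
    by (simp add: sum.remove)
  also have "(\<Sum>j\<in>UNIV. of_real (A$i$j) * z j) = of_real (A$i$i) * z i + (\<Sum>j\<in>UNIV-{i}. of_real (A$i$j) * z j)"
    by (simp add: sum.remove)
  finally show ?thesis by (simp add: algebra_simps)
qed

lemma lap_mv:
  fixes A :: "real^'n^'n"
  shows "(laplacian A *v v) $ i = (\<Sum>j\<in>UNIV-{i}. A$i$j) * v$i - (\<Sum>j\<in>UNIV-{i}. A$i$j * v$j)"
  using lap_sum[of A i "\<lambda>j. v$j :: real"] by (simp add: matrix_vector_mult_def)

lemma stoch_bound:
  fixes A :: "real^'n^'n"
  assumes nonneg: "\<And>i j. A$i$j \<ge> 0" and eps: "\<epsilon> \<ge> 0" "\<And>i. \<epsilon> * (\<Sum>j\<in>UNIV-{i}. A$i$j) \<le> 1"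
   and M: "\<And>j. \<bar>v$j\<bar> \<le> M"
  shows "\<bar>(v - \<epsilon> *\<^sub>R (laplacian A *v v))$i\<bar> \<le> M"
proof -
  define d where "d = (\<Sum>j\<in>UNIV-{i}. A$i$j)"
  have eq: "(v - \<epsilon> *\<^sub>R (laplacian A *v v))$i = (1 - \<epsilon>*d) * v$i + \<epsilon> * (\<Sum>j\<in>UNIV-{i}. A$i$j * v$j)"
    by (simp add: lap_mv d_def algebra_simps)
  have "\<bar>\<Sum>j\<in>UNIV-{i}. A$i$j * v$j\<bar> \<le> (\<Sum>j\<in>UNIV-{i}. A$i$j * M)"
  proof -
    have "\<bar>\<Sum>j\<in>UNIV-{i}. A$i$j * v$j\<bar> \<le> (\<Sum>j\<in>UNIV-{i}. \<bar>A$i$j * v$j\<bar>)" by (rule sum_abs)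
    also have "\<dots> \<le> (\<Sum>j\<in>UNIV-{i}. A$i$j * M)"
      by (rule sum_mono) (simp add: abs_mult nonneg M mult_left_mono)
    finally show ?thesis .
  qed
  also have "\<dots> = d * M" by (simp add: d_def sum_distrib_right)
  finally have s: "\<bar>\<epsilon> * (\<Sum>j\<in>UNIV-{i}. A$i$j * v$j)\<bar> \<le> \<epsilon> * (d * M)"
    using eps(1) by (simp add: abs_mult mult_left_mono)
  have p: "0 \<le> 1 - \<epsilon>*d" using eps(2)[of i] by (simp add: d_def)
  have "\<bar>(1 - \<epsilon>*d) * v$i\<bar> \<le> (1 - \<epsilon>*d) * M"
    using p M[of i] by (simp add: abs_mult mult_left_mono)
  moreover have "\<bar>(1 - \<epsilon>*d) * v$i + \<epsilon> * (\<Sum>j\<in>UNIV-{i}. A$i$j * v$j)\<bar>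
     \<le> \<bar>(1 - \<epsilon>*d) * v$i\<bar> + \<bar>\<epsilon> * (\<Sum>j\<in>UNIV-{i}. A$i$j * v$j)\<bar>" by (rule abs_triangle_ineq)
  moreover have "(1 - \<epsilon>*d) * M + \<epsilon> * (d * M) = M" by (simp add: algebra_simps)
  ultimately show ?thesis using s unfolding eq by linarith
qed

lemma semisimple:
  fixes A :: "real^'n^'n"
  assumes nonneg: "\<And>i j. A$i$j \<ge> 0" and eps: "\<epsilon> > 0" "\<And>i. \<epsilon> * (\<Sum>j\<in>UNIV-{i}. A$i$j) \<le> 1"
    and LL: "laplacian A *v (laplacian A *v v) = 0"
  shows "laplacian A *v v = 0"
proof -
  define w where "w = laplacian A *v v"
  define M where "M = (\<Sum>j\<in>UNIV. \<bar>v$j\<bar>)"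
  have Mv: "\<bar>v$j\<bar> \<le> M" for j
    unfolding M_def by (rule member_le_sum) auto
  have Lw: "laplacian A *v w = 0" using LL w_def by simp
  have bnd: "\<bar>(v - (real k * \<epsilon>) *\<^sub>R w)$i\<bar> \<le> M" for k i
  proof (induction k arbitrary: i)
    case 0 then show ?case using Mv by simp
  next
    case (Suc k)
    define u where "u = v - (real k * \<epsilon>) *\<^sub>R w"
    have "laplacian A *v u = w"
      by (simp add: u_def matrix_vector_mult_diff_distrib matrix_vector_mult_scaleR Lw w_def[symmetric])
    then have "u - \<epsilon> *\<^sub>R (laplacian A *v u) = v - (real (Suc k) * \<epsilon>) *\<^sub>R w"
      by (simp add: u_def algebra_simps)
    moreover have "\<bar>(u - \<epsilon> *\<^sub>R (laplacian A *v u))$i\<bar> \<le> M"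
      by (rule stoch_bound[OF nonneg _ eps(2)]) (use eps Suc u_def in auto)
    ultimately show ?case by simp
  qed
  have "w$i = 0" for i
  proof (rule ccontr)
    assume ne: "w$i \<noteq> 0"
    then have pos: "\<epsilon> * \<bar>w$i\<bar> > 0" using eps by simp
    obtain k where k: "2*M / (\<epsilon> * \<bar>w$i\<bar>) < real k" using reals_Archimedean2 by blast
    then have "2*M < real k * (\<epsilon> * \<bar>w$i\<bar>)" using pos by (simp add: divide_less_eq)
    moreover have "\<bar>v$i - real k * \<epsilon> * w$i\<bar> \<le> M" using bnd[of k i] by simp
    moreover have "\<bar>v$i\<bar> \<le> M" by (rule Mv)
    moreover have "\<bar>real k * \<epsilon> * w$i\<bar> \<le> \<bar>v$i\<bar> + \<bar>v$i - real k * \<epsilon> * w$i\<bar>"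
      by (rule order_trans[OF _ abs_triangle_ineq4]) simp
    moreover have "\<bar>real k * \<epsilon> * w$i\<bar> = real k * (\<epsilon> * \<bar>w$i\<bar>)"
      using eps by (simp add: abs_mult)
    ultimately show False by linarith
  qed
  then show ?thesis by (simp add: w_def Finite_Cartesian_Product.vec_eq_iff)
qed

lemma mat_pow_Suc': "mat_pow M (Suc k) = mat_pow M k ** M"
  by (induction k) (simp_all add: matrix_mul_assoc)

lemma mat_pow_mv1: "mat_pow M (Suc k) *v u = mat_pow M k *v (M *v u)"
  by (simp only: mat_pow_Suc' matrix_vector_mul_assoc)

lemma mat_pow_mv2: "mat_pow M (Suc k) *v u = M *v (mat_pow M k *v u)"
  by (simp add: matrix_vector_mul_assoc)

lemma null_pow:
  fixes L :: "real^'n^'n"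
  assumes SS: "\<And>v. L *v (L *v v) = 0 \<Longrightarrow> L *v v = 0" and k: "k \<ge> 1"
  shows "(mat_pow L k *v u = 0) = (L *v u = 0)"
  using k
proof (induction k arbitrary: u)
  case 0 then show ?case by simp
next
  case (Suc m)
  show ?case
  proof (cases m)
    case 0 then show ?thesis by simp
  next
    case (Suc m')
    then have "(mat_pow L m *v (L *v u) = 0) = (L *v (L *v u) = 0)" using Suc.IH by simp
    moreover have "mat_pow L (Suc m) *v u = mat_pow L m *v (L *v u)" by (rule mat_pow_mv1)
    ultimately show ?thesis using SS by (metis matrix_vector_mult_0_right)
  qed
qed

lemma ones_null: "laplacian A *v ones = 0"
  by (simp add: Finite_Cartesian_Product.vec_eq_iff lap_mv ones_def)

lemma ones_ne: "(ones::real^'n) \<noteq> 0"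
  by (simp add: ones_def Finite_Cartesian_Product.vec_eq_iff)

lemma index_pos:
  fixes L :: "real^'n^'n"
  assumes v: "L *v v = 0" "v \<noteq> 0"
  shows "mat_index L \<noteq> 0"
proof -
  define r where "r k = rank (mat_pow L k)" for k
  have dec: "r (Suc k) \<le> r k" for k
    unfolding r_def by (simp add: rank_mul_le_right)
  have ex: "\<exists>k. r (Suc k) = r k"
  proof (rule ccontr)
    assume "\<not> ?thesis"
    then have lt: "r (Suc k) < r k" for k using dec le_neq_implies_less by blast
    have "r k + k \<le> r 0" for k
    proof (induction k)
      case (Suc k) then show ?case using lt[of k] by linarith
    qed simp
    from this[of "Suc (r 0)"] show False by simp
  qed
  have "rank (mat_pow L (Suc (mat_index L))) = rank (mat_pow L (mat_index L))"
    unfolding mat_index_def using LeastI_ex[OF ex] r_def by simp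
  moreover have "rank L \<noteq> CARD('n)"
    using v matrix_nonfull_linear_equations_eq by blast
  ultimately show ?thesis using rank_I[where 'n='n] by (metis mat_pow.simps matrix_mul_rid)
qed



lemma J_facts:
  fixes L J :: "real^'n^'n"
  assumes J: "is_eigenprojection_zero L J" and SS: "\<And>v. L *v (L *v v) = 0 \<Longrightarrow> L *v v = 0"
    and nu: "mat_index L \<noteq> 0"
  shows JJ: "J *v (J *v z) = J *v z" and LJ: "L *v (J *v z) = 0" and JL: "J *v (L *v z) = 0"
   and R2: "L *v u = 0 \<Longrightarrow> J *v u = 0 \<Longrightarrow> u = 0"
proof -
  define \<nu> where "\<nu> = mat_index L"
  have np: "(mat_pow L \<nu> *v y = 0) = (L *v y = 0)" for y
    using null_pow[OF SS, of \<nu>] nu \<nu>_def by simp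
  have JJm: "J ** J = J" and rJ: "mat_range J = mat_null (mat_pow L \<nu>)"
    and nJ: "mat_null J = mat_range (mat_pow L \<nu>)"
    using J unfolding is_eigenprojection_zero_def \<nu>_def by auto
  have JJ': "J *v (J *v y) = J *v y" for y by (simp add: matrix_vector_mul_assoc JJm)
  then show "J *v (J *v z) = J *v z" .
  have LJ': "L *v (J *v y) = 0" for y
  proof -
    have "J *v y \<in> mat_range J" by (simp add: mat_range_def)
    then have "mat_pow L \<nu> *v (J *v y) = 0" using rJ by (simp add: mat_null_def)
    then show ?thesis using np by simp
  qed
  then show "L *v (J *v z) = 0" .
  show "L *v u = 0 \<Longrightarrow> J *v u = 0 \<Longrightarrow> u = 0"
  proof -
    assume a: "L *v u = 0" "J *v u = 0"
    then have "u \<in> mat_null (mat_pow L \<nu>)" using np by (simp add: mat_null_def)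
    then obtain w where "u = J *v w" using rJ by (auto simp: mat_range_def)
    then have "J *v u = u" using JJ' by simp
    then show "u = 0" using a by simp
  qed
  have "z - J *v z \<in> mat_null J" by (simp add: mat_null_def matrix_vector_mult_diff_distrib JJ')
  then obtain w where w: "z - J *v z = mat_pow L \<nu> *v w" using nJ by (auto simp: mat_range_def)
  have "L *v z = L *v (z - J *v z)" by (simp add: matrix_vector_mult_diff_distrib LJ')
  also have "\<dots> = mat_pow L \<nu> *v (L *v w)" by (simp only: w mat_pow_mv1[symmetric] mat_pow_mv2)
  finally have "L *v z \<in> mat_range (mat_pow L \<nu>)" by (auto simp: mat_range_def)
  then show "J *v (L *v z) = 0" using nJ by (auto simp: mat_null_def)
qed

lemma geom:
  fixes \<mu> :: complex
  assumes h: "cmod (\<mu> - of_real p) \<le> 1 - p" and p: "0 < p" "p \<le> 1"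
  shows "cmod \<mu> \<le> 1" and "cmod \<mu> = 1 \<Longrightarrow> \<mu> = 1"
proof -
  have "cmod \<mu> \<le> cmod (\<mu> - of_real p) + cmod (of_real p :: complex)"
    by (metis diff_add_cancel norm_triangle_ineq)
  then show "cmod \<mu> \<le> 1" using h p by simp
  assume e: "cmod \<mu> = 1"
  have "cmod (\<mu> - of_real p) ^ 2 \<le> (1 - p) ^ 2"
    using h by (simp add: power_mono)
  then have h2: "(Re \<mu> - p)^2 + (Im \<mu>)^2 \<le> (1-p)^2" by (simp add: cmod_power2)
  have e2: "(Re \<mu>)^2 + (Im \<mu>)^2 = 1" using e by (metis cmod_power2 power_one)
  have "(Re \<mu> - p)^2 = (Re \<mu>)^2 - 2*(p*Re \<mu>) + p^2" by (simp add: power2_diff mult.commute)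
  moreover have "(1 - p)^2 = 1 - 2*p + p^2" by (simp add: power2_diff)
  ultimately have "p * (Re \<mu> - 1) \<ge> 0" using h2 e2 by (simp add: algebra_simps)
  then have "Re \<mu> \<ge> 1" using p by (simp add: zero_le_mult_iff)
  then have r1: "(Re \<mu>)^2 \<ge> 1" by (simp add: one_le_power)
  then have "(Im \<mu>)^2 \<le> 0" using e2 by linarith
  then have i0: "Im \<mu> = 0" by simp
  then have "(Re \<mu>)^2 = 1" using e2 by simp
  then have "Re \<mu> = 1" using \<open>Re \<mu> \<ge> 1\<close> by (simp add: power2_eq_1_iff)
  with i0 show "\<mu> = 1" by (simp add: complex_eq_iff)
qed

lemma eig_bound:
  fixes A J K :: "real^'n^'n" and z :: "'n \<Rightarrow> complex"
  assumes nonneg: "\<And>i j. A$i$j \<ge> 0" and eps: "\<epsilon> > 0" "\<And>i. \<epsilon> * (\<Sum>j\<in>UNIV-{i}. A$i$j) \<le> 1/2"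
    and Kdef: "K = mat 1 - \<epsilon> *\<^sub>R laplacian A - J"
    and JK: "J ** K = 0"
    and R2: "\<And>u. laplacian A *v u = 0 \<Longrightarrow> J *v u = 0 \<Longrightarrow> u = 0"
    and eig: "\<And>i. (\<Sum>j\<in>UNIV. of_real (K$i$j) * z j) = \<mu> * z i" and nz: "z i0 \<noteq> 0"
  shows "cmod \<mu> < 1"
proof -
  let ?L = "laplacian A"
  define d where "d i = (\<Sum>j\<in>UNIV-{i}. A$i$j)" for i
  define Jz where "Jz i = (\<Sum>j\<in>UNIV. of_real (J$i$j) * z j)" for i
  define Lz where "Lz i = (\<Sum>j\<in>UNIV. of_real (?L$i$j) * z j)" for i
  have JKe: "(\<Sum>j\<in>UNIV. J$i$j * K$j$k) = 0" for i k
  proof -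
    have "(J ** K)$i$k = 0" using JK by simp
    then show ?thesis by (simp add: matrix_matrix_mult_def)
  qed
  have muJ: "\<mu> * Jz i = 0" for i
  proof -
    have "\<mu> * Jz i = (\<Sum>j\<in>UNIV. of_real (J$i$j) * (\<mu> * z j))"
      by (simp add: Jz_def sum_distrib_left algebra_simps)
    also have "\<dots> = (\<Sum>j\<in>UNIV. of_real (J$i$j) * (\<Sum>k\<in>UNIV. of_real (K$j$k) * z k))"
      by (simp add: eig)
    also have "\<dots> = (\<Sum>j\<in>UNIV. \<Sum>k\<in>UNIV. of_real (J$i$j * K$j$k) * z k)"
      by (simp add: sum_distrib_left mult.assoc)
    also have "\<dots> = (\<Sum>k\<in>UNIV. \<Sum>j\<in>UNIV. of_real (J$i$j * K$j$k) * z k)"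
      by (rule sum.swap)
    also have "\<dots> = (\<Sum>k\<in>UNIV. of_real (\<Sum>j\<in>UNIV. J$i$j * K$j$k) * z k)"
      by (simp add: sum_distrib_right of_real_sum)
    also have "\<dots> = 0" by (simp add: JKe)
    finally show ?thesis .
  qed
  have Kz: "(\<Sum>j\<in>UNIV. of_real (K$i$j) * z j) = z i - of_real \<epsilon> * Lz i - Jz i" for i
  proof -
    have "(\<Sum>j\<in>UNIV. of_real (K$i$j) * z j)
        = (\<Sum>j\<in>UNIV. (if i = j then z j else 0) - of_real \<epsilon> * (of_real (?L$i$j) * z j) - of_real (J$i$j) * z j)"
      by (rule sum.cong) (auto simp: Kdef Finite_Cartesian_Product.mat_def algebra_simps)
    also have "\<dots> = z i - of_real \<epsilon> * Lz i - Jz i"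
      by (simp add: sum_subtractf Lz_def Jz_def sum_distrib_left)
    finally show ?thesis .
  qed
  have Lzf: "Lz i = of_real (d i) * z i - (\<Sum>j\<in>UNIV-{i}. of_real (A$i$j) * z j)" for i
    unfolding Lz_def d_def by (rule lap_sum)
  show ?thesis
  proof (cases "\<mu> = 0")
    case True then show ?thesis by simp
  next
    case False
    then have Jz0: "Jz i = 0" for i using muJ by simp
    have eqn: "(\<mu> - of_real (1 - \<epsilon> * d i)) * z i = of_real \<epsilon> * (\<Sum>j\<in>UNIV-{i}. of_real (A$i$j) * z j)" for i
      using eig[of i] Kz[of i] Jz0[of i] Lzf[of i] by (simp add: algebra_simps)
    define mx where "mx = Max (range (\<lambda>j. cmod (z j)))"
    have "mx \<in> range (\<lambda>j. cmod (z j))" unfolding mx_def by (rule Max_in) auto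
    then obtain m where mdef: "mx = cmod (z m)" by auto
    have mge: "cmod (z j) \<le> cmod (z m)" for j
    proof -
      have "cmod (z j) \<le> mx" unfolding mx_def by (rule Max_ge) auto
      then show ?thesis using mdef by simp
    qed
    have "cmod (z i0) > 0" using nz by simp
    then have zm: "cmod (z m) > 0" using mge[of i0] by linarith
    define p where "p = 1 - \<epsilon> * d m"
    have dnn: "d m \<ge> 0" unfolding d_def by (simp add: nonneg sum_nonneg)
    have p: "0 < p" "p \<le> 1" using eps(2)[of m] dnn eps(1) by (auto simp: p_def d_def)
    have "cmod (\<Sum>j\<in>UNIV-{m}. of_real (A$m$j) * z j) \<le> (\<Sum>j\<in>UNIV-{m}. cmod (of_real (A$m$j) * z j))"
      by (rule norm_sum)
    also have "\<dots> \<le> (\<Sum>j\<in>UNIV-{m}. A$m$j * cmod (z m))"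
      by (rule sum_mono) (simp add: norm_mult nonneg mge mult_left_mono)
    also have "\<dots> = d m * cmod (z m)" by (simp add: d_def sum_distrib_right)
    finally have "cmod ((\<mu> - of_real p) * z m) \<le> \<epsilon> * (d m * cmod (z m))"
      using eqn[of m] eps(1) by (simp add: p_def norm_mult mult_left_mono)
    then have "cmod (\<mu> - of_real p) * cmod (z m) \<le> (1 - p) * cmod (z m)"
      by (simp add: norm_mult p_def)
    then have hp: "cmod (\<mu> - of_real p) \<le> 1 - p" using zm by simp
    note g = geom[OF hp p]
    show ?thesis
    proof (rule ccontr)
      assume "\<not> cmod \<mu> < 1"
      then have "cmod \<mu> = 1" using g(1) by simp
      then have mu1: "\<mu> = 1" using g(2) by simp
      have Lz0: "Lz i = 0" for i using eig[of i] Kz[of i] Jz0[of i] mu1 eps(1) by simp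
      define u where "u = (\<chi> i. Re (z i))"
      define v where "v = (\<chi> i. Im (z i))"
      have "?L *v u = 0"
      proof -
        have "(?L *v u)$i = Re (Lz i)" for i by (simp add: Lz_def u_def matrix_vector_mult_def)
        then show ?thesis by (simp add: Finite_Cartesian_Product.vec_eq_iff Lz0)
      qed
      moreover have "J *v u = 0"
      proof -
        have "(J *v u)$i = Re (Jz i)" for i by (simp add: Jz_def u_def matrix_vector_mult_def)
        then show ?thesis by (simp add: Finite_Cartesian_Product.vec_eq_iff Jz0)
      qed
      ultimately have u0: "u = 0" by (rule R2)
      have "?L *v v = 0"
      proof -
        have "(?L *v v)$i = Im (Lz i)" for i by (simp add: Lz_def v_def matrix_vector_mult_def)
        then show ?thesis by (simp add: Finite_Cartesian_Product.vec_eq_iff Lz0)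
      qed
      moreover have "J *v v = 0"
      proof -
        have "(J *v v)$i = Im (Jz i)" for i by (simp add: Jz_def v_def matrix_vector_mult_def)
        then show ?thesis by (simp add: Finite_Cartesian_Product.vec_eq_iff Jz0)
      qed
      ultimately have v0: "v = 0" by (rule R2)
      have "z i0 = 0" using u0 v0 unfolding u_def v_def by (simp add: Finite_Cartesian_Product.vec_eq_iff complex_eq_iff)
      with nz show False by simp
    qed
  qed
qed



lemma smult_mat_vec_assoc:
  assumes "A \<in> carrier_mat n n" "v \<in> carrier_vec n"
  shows "(c \<cdot>\<^sub>m A) *\<^sub>v v = (c::complex) \<cdot>\<^sub>v (A *\<^sub>v v)"
  using assms by (intro eq_vecI) (auto simp: scalar_prod_def sum_distrib_left mult.assoc)

lemma smult_pow_mat: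
  assumes A: "(A::complex mat) \<in> carrier_mat n n"
  shows "(c \<cdot>\<^sub>m A) ^\<^sub>m k = (c^k) \<cdot>\<^sub>m (A ^\<^sub>m k)"
proof (induction k)
  case 0 then show ?case using A by (intro eq_matI) auto
next
  case (Suc k)
  have "(c \<cdot>\<^sub>m A) ^\<^sub>m Suc k = (c^k \<cdot>\<^sub>m (A ^\<^sub>m k)) * (c \<cdot>\<^sub>m A)" using Suc by simp
  also have "\<dots> = c^k \<cdot>\<^sub>m ((A ^\<^sub>m k) * (c \<cdot>\<^sub>m A))"
    using A by (intro mult_smult_assoc_mat) auto
  also have "\<dots> = c^k \<cdot>\<^sub>m (c \<cdot>\<^sub>m ((A ^\<^sub>m k) * A))"
    using A by (subst mult_smult_distrib) auto
  also have "\<dots> = (c^Suc k) \<cdot>\<^sub>m (A ^\<^sub>m Suc k)"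
    using A by (intro eq_matI) auto
  finally show ?case .
qed

lemma decay:
  fixes K :: "real^'n^'n"
  assumes ev: "\<And>\<mu> z. (\<And>i. (\<Sum>j\<in>UNIV. of_real (K$i$j) * z j) = \<mu> * z i) \<Longrightarrow> (\<exists>i. z i \<noteq> 0) \<Longrightarrow> cmod \<mu> < 1"
  shows "\<exists>B r. 0 < r \<and> r < 1 \<and> 0 \<le> B \<and> (\<forall>k y. norm (mat_pow K k *v y) \<le> B * r^k * norm y)"
proof -
  define n where "n = CARD('n)"
  have n0: "n > 0" unfolding n_def by simp
  obtain e where e: "bij_betw e {0..<n} (UNIV::'n set)"
    using ex_bij_betw_nat_finite[of "UNIV::'n set"] n_def by auto
  define ie where "ie = inv_into {0..<n} e"
  have e_ie: "e (ie a) = a" for a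
    unfolding ie_def using e by (simp add: bij_betw_inv_into_right)
  have ie_lt: "ie a < n" for a
    unfolding ie_def using e by (metis atLeastLessThan_iff bij_betw_def inv_into_into UNIV_I)
  have ie_e: "i < n \<Longrightarrow> ie (e i) = i" for i
    unfolding ie_def using e by (simp add: bij_betw_inv_into_left)
  have e_inj: "i < n \<Longrightarrow> j < n \<Longrightarrow> (e i = e j) = (i = j)" for i j
    by (metis ie_e)
  have reidx: "(\<Sum>k\<in>{0..<n}. f (e k)) = (\<Sum>a\<in>UNIV. f a)" for f :: "'n \<Rightarrow> complex"
    using sum.reindex_bij_betw[OF e, of f] .
  define cm where "cm X = Matrix.mat n n (\<lambda>(i,j). complex_of_real (X $ e i $ e j))" for X :: "real^'n^'n"
  have cm_carrier: "cm X \<in> carrier_mat n n" for X unfolding cm_def by simp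
  have cm_dims[simp]: "dim_row (cm X) = n" "dim_col (cm X) = n" for X unfolding cm_def by simp_all
  have cm_idx: "i < n \<Longrightarrow> j < n \<Longrightarrow> cm X $$ (i,j) = of_real (X $ e i $ e j)" for X i j
    unfolding cm_def by simp
  have cm_mult: "cm (X ** Y) = cm X * cm Y" for X Y
  proof (rule eq_matI)
    fix i j assume ij: "i < dim_row (cm X * cm Y)" "j < dim_col (cm X * cm Y)"
    then have ij': "i < n" "j < n" by auto
    have "(cm X * cm Y) $$ (i,j) = (\<Sum>k\<in>{0..<n}. of_real (X $ e i $ e k) * of_real (Y $ e k $ e j))"
      using ij' cm_carrier by (simp add: scalar_prod_def cm_idx)
    also have "\<dots> = (\<Sum>a\<in>UNIV. of_real (X $ e i $ a) * of_real (Y $ a $ e j))"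
      by (rule reidx)
    also have "\<dots> = cm (X ** Y) $$ (i,j)"
      using ij' by (simp add: cm_idx matrix_matrix_mult_def of_real_sum)
    finally show "cm (X ** Y) $$ (i,j) = (cm X * cm Y) $$ (i,j)" by simp
  qed (use cm_carrier in auto)
  have cm_one: "cm (mat 1) = 1\<^sub>m n"
    by (rule eq_matI) (auto simp: cm_idx Finite_Cartesian_Product.mat_def e_inj cm_carrier)
  have cm_pow: "cm (mat_pow K k) = cm K ^\<^sub>m k" for k
  proof (induction k)
    case 0 then show ?case using cm_one cm_carrier by simp
  next
    case (Suc k) then show ?case by (simp only: mat_pow_Suc' cm_mult pow_mat.simps)
  qed
  have evK: "cmod \<mu> < 1" if ev0: "eigenvalue (cm K) \<mu>" for \<mu>
  proof -
    obtain v where v: "v \<in> carrier_vec n" "v \<noteq> 0\<^sub>v n" "cm K *\<^sub>v v = \<mu> \<cdot>\<^sub>v v"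
      using ev0 unfolding eigenvalue_def eigenvector_def by auto
    define z where "z a = vec_index v (ie a)" for a
    show ?thesis
    proof (rule ev)
      fix a
      have "vec_index (cm K *\<^sub>v v) (ie a) = (\<Sum>k\<in>{0..<n}. of_real (K $ a $ e k) * z (e k))"
        using v(1) cm_carrier ie_lt[of a] by (simp add: scalar_prod_def cm_idx e_ie z_def ie_e)
      also have "\<dots> = (\<Sum>b\<in>UNIV. of_real (K $ a $ b) * z b)" by (rule reidx)
      finally show "(\<Sum>b\<in>UNIV. of_real (K $ a $ b) * z b) = \<mu> * z a"
        using v(3) v(1) ie_lt[of a] by (simp add: z_def)
    next
      show "\<exists>i. z i \<noteq> 0"
      proof (rule ccontr)
        assume "\<not> ?thesis"
        then have "vec_index v k = 0" if "k < n" for k using that ie_e[of k] unfolding z_def by metis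
        then have "v = 0\<^sub>v n" using v(1) by (intro eq_vecI) auto
        with v(2) show False by simp
      qed
    qed
  qed
  define \<rho> where "\<rho> = spectral_radius (cm K)"
  obtain \<mu>0 where "\<mu>0 \<in> spectrum (cm K)" "\<rho> = cmod \<mu>0"
    using spectral_radius_mem_max(1)[OF cm_carrier n0] \<rho>_def by auto
  then have \<rho>1: "\<rho> < 1" and \<rho>0: "\<rho> \<ge> 0" using evK unfolding spectrum_def by auto
  define r where "r = (1 + \<rho>) / 2"
  have r: "0 < r" "r < 1" "\<rho> < r" using \<rho>1 \<rho>0 by (auto simp: r_def)
  define K2 where "K2 = complex_of_real (1/r) \<cdot>\<^sub>m cm K"
  have K2c: "K2 \<in> carrier_mat n n" unfolding K2_def using cm_carrier by simp
  have cmK2: "cm K = complex_of_real r \<cdot>\<^sub>m K2"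
    unfolding K2_def using cm_carrier r by (intro eq_matI) auto
  have "spectral_radius K2 < 1"
  proof -
    obtain \<mu> where \<mu>: "\<mu> \<in> spectrum K2" "spectral_radius K2 = cmod \<mu>"
      using spectral_radius_mem_max(1)[OF K2c n0] by auto
    then obtain v where v: "v \<in> carrier_vec n" "v \<noteq> 0\<^sub>v n" "K2 *\<^sub>v v = \<mu> \<cdot>\<^sub>v v"
      using K2c unfolding spectrum_def eigenvalue_def eigenvector_def by auto
    have "cm K *\<^sub>v v = (complex_of_real r * \<mu>) \<cdot>\<^sub>v v"
      unfolding cmK2 using v K2c by (simp add: smult_mat_vec_assoc smult_smult_assoc)
    then have "eigenvalue (cm K) (complex_of_real r * \<mu>)"
      unfolding eigenvalue_def eigenvector_def using v cm_carrier by auto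
    then have "cmod (complex_of_real r * \<mu>) \<le> \<rho>"
      unfolding \<rho>_def using spectral_radius_mem_max(2)[OF cm_carrier n0] unfolding spectrum_def by auto
    then have "r * cmod \<mu> \<le> \<rho>" using r by (simp add: norm_mult)
    then have "r * cmod \<mu> < r * 1" using r by linarith
    then have "cmod \<mu> < 1" using r(1) mult_less_cancel_left_pos by blast
    then show ?thesis using \<mu> by simp
  qed
  then obtain c where c: "\<And>k. norm_bound (K2 ^\<^sub>m k) c"
    using spectral_radius_jnf_norm_bound_less_1_upper_triangular[OF K2c] by auto
  have "\<forall>i<n. \<forall>j<n. cmod (if i = j then 1 else (0::complex)) \<le> c"
    using c[of 0] K2c unfolding norm_bound_def by simp
  then have "cmod (if (0::nat) = 0 then 1 else (0::complex)) \<le> c" using n0 by blast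
  then have c0: "c \<ge> 0" by simp
  have ent: "\<bar>mat_pow K k $ a $ b\<bar> \<le> c * r^k" for k a b
  proof -
    have "complex_of_real (mat_pow K k $ a $ b) = cm (mat_pow K k) $$ (ie a, ie b)"
      using ie_lt by (simp add: cm_idx e_ie)
    also have "\<dots> = complex_of_real (r^k) * (K2 ^\<^sub>m k) $$ (ie a, ie b)"
      unfolding cm_pow cmK2 smult_pow_mat[OF K2c] using ie_lt K2c by simp
    finally have "\<bar>mat_pow K k $ a $ b\<bar> = r^k * cmod ((K2 ^\<^sub>m k) $$ (ie a, ie b))"
      using r by (metis norm_mult norm_of_real abs_of_nonneg zero_le_power less_imp_le)
    also have "\<dots> \<le> r^k * c"
      using c[of k] ie_lt K2c r unfolding norm_bound_def by (simp add: mult_left_mono)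
    finally show ?thesis by (simp add: mult.commute)
  qed
  have "norm (mat_pow K k *v y) \<le> (real n * real n * c) * r^k * norm y" for k y
  proof -
    have "norm (mat_pow K k *v y) \<le> (\<Sum>a\<in>UNIV. \<bar>(mat_pow K k *v y) $ a\<bar>)" by (rule norm_le_l1_cart)
    also have "\<dots> \<le> (\<Sum>a\<in>(UNIV::'n set). real n * (c * r^k * norm y))"
    proof (rule sum_mono)
      fix a
      have "\<bar>(mat_pow K k *v y) $ a\<bar> \<le> (\<Sum>b\<in>UNIV. \<bar>mat_pow K k $ a $ b * y $ b\<bar>)"
        unfolding matrix_vector_mult_def by (simp add: sum_abs)
      also have "\<dots> \<le> (\<Sum>b\<in>(UNIV::'n set). c * r^k * norm y)"
      proof (rule sum_mono)
        fix b
        have "\<bar>mat_pow K k $ a $ b\<bar> * \<bar>y $ b\<bar> \<le> (c * r^k) * norm y"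
          by (rule mult_mono[OF ent component_le_norm_cart]) (use c0 r in auto)
        then show "\<bar>mat_pow K k $ a $ b * y $ b\<bar> \<le> c * r^k * norm y" by (simp add: abs_mult)
      qed
      also have "\<dots> = real n * (c * r^k * norm y)" by (simp add: n_def)
      finally show "\<bar>(mat_pow K k *v y) $ a\<bar> \<le> real n * (c * r^k * norm y)" .
    qed
    also have "\<dots> = (real n * real n * c) * r^k * norm y" by (simp add: n_def)
    finally show ?thesis .
  qed
  then show ?thesis using r c0 by (intro exI[of _ "real n * real n * c"] exI[of _ r]) auto
qed



lemma exp_decay_tendsto:
  assumes "\<alpha> > 0"
  shows "((\<lambda>t::real. exp (-(\<alpha>*t))) \<longlongrightarrow> 0) at_top"
proof -
  have "filterlim (\<lambda>t::real. \<alpha> * t) at_top at_top"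
    using assms by (intro filterlim_tendsto_pos_mult_at_top[OF tendsto_const] filterlim_ident) auto
  then have "filterlim (\<lambda>t::real. exp (\<alpha> * t)) at_top at_top"
    by (rule filterlim_compose[OF exp_at_top])
  then have "((\<lambda>t. inverse (exp (\<alpha> * t))) \<longlongrightarrow> 0) at_top"
    by (rule tendsto_inverse_0_at_top)
  then show ?thesis by (simp add: exp_minus)
qed

lemma two_inner_le: "2 * (a \<bullet> b) \<le> a \<bullet> a + b \<bullet> (b::'a::real_inner)"
proof -
  have "0 \<le> (a - b) \<bullet> (a - b)" by simp
  then show ?thesis by (simp add: inner_diff_left inner_diff_right inner_commute)
qed

lemma lyap_decay:
  fixes K :: "real^'n^'n" and q :: "real \<Rightarrow> real^'n"
  assumes eps: "\<epsilon> > 0"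
    and bnd: "\<And>k z. norm (mat_pow K k *v z) \<le> B * r^k * norm z" and r: "0 < r" "r < 1" and B: "0 \<le> B"
    and dq: "\<And>t. t > 0 \<Longrightarrow> (q has_vector_derivative ((1/\<epsilon>) *\<^sub>R (K *v q t - q t))) (at t)"
  shows "(q \<longlongrightarrow> 0) at_top"
proof -
  define B1 where "B1 = B + 1"
  have B1: "B1 > 0" using B by (simp add: B1_def)
  obtain N0 where N0: "r^N0 < 1 / (2 * B1)" using real_arch_pow_inv[of "1/(2*B1)" r] B1 r by auto
  define N where "N = Suc N0"
  have "r^N \<le> r^N0" unfolding N_def using r by (simp add: power_decreasing)
  then have "B1 * r^N \<le> B1 * r^N0" using B1 by simp
  also have "\<dots> \<le> B1 * (1/(2*B1))" using N0 B1 by (intro mult_left_mono) auto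
  also have "\<dots> = 1/2" using B1 by simp
  finally have rN: "B1 * r^N \<le> 1/2" .
  have bnd1: "norm (mat_pow K k *v z) \<le> B1 * r^k * norm z" for k z
  proof -
    have "B * r^k * norm z \<le> B1 * r^k * norm z"
      unfolding B1_def using r by (intro mult_right_mono) (auto simp: algebra_simps)
    then show ?thesis using bnd[of k z] by linarith
  qed
  have KN: "norm (mat_pow K N *v z) \<le> 1/2 * norm z" for z
    using bnd1[of N z] mult_right_mono[OF rN norm_ge_zero[of z]] by linarith
  have Kk: "norm (mat_pow K k *v z) \<le> B1 * norm z" for k z
  proof -
    have "r^k \<le> 1" using r by (simp add: power_le_one)
    then have "B1 * r^k * norm z \<le> B1 * 1 * norm z" using B1 by (intro mult_right_mono mult_left_mono) auto
    then show ?thesis using bnd1[of k z] by linarith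
  qed
  define Q where "Q z = (\<Sum>k<N. (mat_pow K k *v z) \<bullet> (mat_pow K k *v z))" for z
  have Qlow: "norm z ^ 2 \<le> Q z" for z
  proof -
    have "Q z = z \<bullet> z + (\<Sum>k<N0. (mat_pow K (Suc k) *v z) \<bullet> (mat_pow K (Suc k) *v z))"
      unfolding Q_def N_def by (simp only: sum.lessThan_Suc_shift) simp
    moreover have "0 \<le> (\<Sum>k<N0. (mat_pow K (Suc k) *v z) \<bullet> (mat_pow K (Suc k) *v z))"
      by (rule sum_nonneg) simp
    ultimately show ?thesis by (simp add: power2_norm_eq_inner)
  qed
  define C where "C = real N * B1^2"
  have C: "C > 0" using B1 by (simp add: C_def N_def)
  have Qup: "Q z \<le> C * norm z ^ 2" for z
  proof -
    have "Q z \<le> (\<Sum>k<N. (B1 * norm z)^2)"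
      unfolding Q_def
    proof (rule sum_mono)
      fix k
      have "norm (mat_pow K k *v z) ^ 2 \<le> (B1 * norm z)^2"
        by (rule power_mono[OF Kk]) simp
      then show "(mat_pow K k *v z) \<bullet> (mat_pow K k *v z) \<le> (B1 * norm z)^2"
        by (simp add: power2_norm_eq_inner)
    qed
    then show ?thesis by (simp add: C_def power_mult_distrib)
  qed
  define a where "a t k = mat_pow K k *v q t" for t k
  define D where "D t = (\<Sum>k<N. 2 * (a t k \<bullet> (mat_pow K k *v ((1/\<epsilon>) *\<^sub>R (K *v q t - q t)))))" for t
  have dQ: "((\<lambda>s. Q (q s)) has_real_derivative D t) (at t)" if t: "t > 0" for t
  proof -
    have dk: "((\<lambda>s. mat_pow K k *v q s) has_vector_derivative (mat_pow K k *v ((1/\<epsilon>) *\<^sub>R (K *v q t - q t)))) (at t)" for k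
      by (rule bounded_linear.has_vector_derivative[OF matrix_vector_mul_bounded_linear dq[OF t]])
    have "((\<lambda>s. Q (q s)) has_vector_derivative D t) (at t)"
      unfolding Q_def D_def
    proof (rule has_vector_derivative_sum)
      fix k assume "k \<in> {..<N}"
      have "((\<lambda>s. (mat_pow K k *v q s) \<bullet> (mat_pow K k *v q s)) has_vector_derivative
          ((mat_pow K k *v q t) \<bullet> (mat_pow K k *v ((1/\<epsilon>) *\<^sub>R (K *v q t - q t))) +
           (mat_pow K k *v ((1/\<epsilon>) *\<^sub>R (K *v q t - q t))) \<bullet> (mat_pow K k *v q t))) (at t)"
        by (rule bounded_bilinear.has_vector_derivative[OF bounded_bilinear_inner dk dk])
      then show "((\<lambda>s. (mat_pow K k *v q s) \<bullet> (mat_pow K k *v q s)) has_vector_derivative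
          2 * (a t k \<bullet> (mat_pow K k *v ((1/\<epsilon>) *\<^sub>R (K *v q t - q t))))) (at t)"
        by (simp add: a_def inner_commute)
    qed
    then show ?thesis by (simp add: has_real_derivative_iff_has_vector_derivative)
  qed
  have Dle: "D t \<le> -(1/(2*\<epsilon>)) * norm (q t) ^ 2" for t
  proof -
    have step: "mat_pow K k *v ((1/\<epsilon>) *\<^sub>R (K *v q t - q t)) = (1/\<epsilon>) *\<^sub>R (a t (Suc k) - a t k)" for k
      by (simp add: a_def matrix_vector_mult_scaleR matrix_vector_mult_diff_distrib mat_pow_mv1 del: mat_pow.simps)
    have tk: "2 * (a t k \<bullet> a t (Suc k)) - 2 * (a t k \<bullet> a t k) \<le> a t (Suc k) \<bullet> a t (Suc k) - a t k \<bullet> a t k" for k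
      using two_inner_le[of "a t k" "a t (Suc k)"] by linarith
    have "D t = (1/\<epsilon>) * (\<Sum>k<N. 2 * (a t k \<bullet> a t (Suc k)) - 2 * (a t k \<bullet> a t k))"
      unfolding D_def step by (simp add: sum_distrib_left inner_diff_right algebra_simps)
    also have "\<dots> \<le> (1/\<epsilon>) * (\<Sum>k<N. a t (Suc k) \<bullet> a t (Suc k) - a t k \<bullet> a t k)"
      using eps tk by (intro mult_left_mono sum_mono) auto
    also have "(\<Sum>k<N. a t (Suc k) \<bullet> a t (Suc k) - a t k \<bullet> a t k) = a t N \<bullet> a t N - a t 0 \<bullet> a t 0"
      by (rule sum_lessThan_telescope)
    also have "a t N \<bullet> a t N \<le> (1/4) * norm (q t) ^ 2"
    proof -
      have "norm (a t N) ^ 2 \<le> (1/2 * norm (q t))^2" unfolding a_def by (rule power_mono[OF KN]) simp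
      also have "\<dots> = (1/4) * norm (q t) ^ 2" by (simp add: power2_eq_square)
      finally show ?thesis by (simp only: power2_norm_eq_inner)
    qed
    also have "a t 0 \<bullet> a t 0 = norm (q t) ^ 2" by (simp add: a_def power2_norm_eq_inner)
    finally show ?thesis using eps zero_le_power2[of "norm (q t)"] by (simp add: field_simps, linarith)
  qed
  define \<alpha> where "\<alpha> = 1 / (2 * \<epsilon> * C)"
  have \<alpha>: "\<alpha> > 0" using eps C by (simp add: \<alpha>_def)
  have Dle2: "D t \<le> -\<alpha> * Q (q t)" for t
  proof -
    have "\<alpha> * Q (q t) \<le> \<alpha> * (C * norm (q t) ^ 2)" using Qup \<alpha> by (simp add: mult_left_mono)
    also have "\<dots> = (1/(2*\<epsilon>)) * norm (q t) ^ 2" using C by (simp add: \<alpha>_def)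
    finally show ?thesis using Dle[of t] by linarith
  qed
  define g where "g s = exp (\<alpha> * s) * Q (q s)" for s
  have gdec: "g t \<le> g 1" if "t \<ge> 1" for t
  proof (rule DERIV_nonpos_imp_nonincreasing[OF that])
    fix s assume s: "1 \<le> s" "s \<le> t"
    have "(g has_real_derivative (exp (\<alpha> * s) * (\<alpha> * Q (q s)) + exp (\<alpha> * s) * D s)) (at s)"
      unfolding g_def using s
      by (auto intro!: derivative_eq_intros dQ simp: algebra_simps)
    moreover have "exp (\<alpha> * s) * (\<alpha> * Q (q s)) + exp (\<alpha> * s) * D s \<le> 0"
    proof -
      have "\<alpha> * Q (q s) + D s \<le> 0" using Dle2[of s] by simp
      then have "exp (\<alpha> * s) * (\<alpha> * Q (q s) + D s) \<le> 0" by (simp add: mult_nonneg_nonpos)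
      then show ?thesis by (simp add: algebra_simps)
    qed
    ultimately show "\<exists>y. (g has_real_derivative y) (at s) \<and> y \<le> 0" by blast
  qed
  have ev: "eventually (\<lambda>t. norm (q t) \<le> sqrt (g 1 * exp (-(\<alpha>*t)))) at_top"
    using eventually_ge_at_top[of 1]
  proof eventually_elim
    case (elim t)
    have "norm (q t) ^ 2 \<le> Q (q t)" by (rule Qlow)
    also have "Q (q t) = exp (-(\<alpha>*t)) * g t" by (simp add: g_def exp_minus field_simps)
    also have "\<dots> \<le> exp (-(\<alpha>*t)) * g 1" using gdec[OF elim] by simp
    finally show ?case by (simp add: mult.commute real_le_rsqrt)
  qed
  have "((\<lambda>t. sqrt (g 1 * exp (-(\<alpha>*t)))) \<longlongrightarrow> sqrt (g 1 * 0)) at_top"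
    by (intro tendsto_real_sqrt tendsto_mult tendsto_const exp_decay_tendsto \<alpha>)
  then have "((\<lambda>t. sqrt (g 1 * exp (-(\<alpha>*t)))) \<longlongrightarrow> 0) at_top" by simp
  with ev show ?thesis by (rule Lim_null_comparison)
qed



lemma mv_neg: "(M::real^'n^'m) *v (- y) = - (M *v y)"
  using matrix_vector_mult_diff_distrib[of M 0 y] by simp

theorem theorem6:
  fixes A S J :: "real^'n^'n" and \<tau> :: real and x :: "real \<Rightarrow> real^'n"
  assumes nonneg: "\<And>i j. A$i$j \<ge> 0"
    and tau_pos: "0 < \<tau>"
    and tau_le: "\<tau> * (MAX i\<in>UNIV. (\<Sum>j\<in>UNIV-{i}. A$i$j)) \<le> 1"
    and S_proj: "is_orth_proj S (span (mat_range (laplacian A) \<union> {ones}))"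
    and J_eig: "is_eigenprojection_zero (laplacian A) J"
    and ode: "\<And>t. t \<ge> 0 \<Longrightarrow>
       (x has_vector_derivative
          (- (((1/\<tau>) *\<^sub>R (mat 1 - S) + laplacian A ** S) *v x t))) (at t within {0..})"
  shows "(x \<longlongrightarrow> (J ** S) *v x 0) at_top"
proof -
  have dle: "\<tau> * (\<Sum>j\<in>UNIV-{i}. A$i$j) \<le> 1" for i
  proof -
    have "(\<Sum>j\<in>UNIV-{i}. A$i$j) \<le> (MAX i\<in>UNIV. (\<Sum>j\<in>UNIV-{i}. A$i$j))" by (rule Max_ge) auto
    then have "\<tau> * (\<Sum>j\<in>UNIV-{i}. A$i$j) \<le> \<tau> * (MAX i\<in>UNIV. (\<Sum>j\<in>UNIV-{i}. A$i$j))"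
      using tau_pos by (simp add: mult_left_mono)
    with tau_le show ?thesis by linarith
  qed
  define \<epsilon> where "\<epsilon> = \<tau> / 2"
  have eps0: "\<epsilon> > 0" using tau_pos by (simp add: \<epsilon>_def)
  have eps2: "\<epsilon> * (\<Sum>j\<in>UNIV-{i}. A$i$j) \<le> 1/2" for i using dle[of i] by (simp add: \<epsilon>_def)
  have SS: "\<And>v. laplacian A *v (laplacian A *v v) = 0 \<Longrightarrow> laplacian A *v v = 0"
    using semisimple[OF nonneg tau_pos dle] by blast
  have nu: "mat_index (laplacian A) \<noteq> 0" by (rule index_pos[OF ones_null ones_ne])
  note JF = J_facts[OF J_eig SS nu]
  have JJ: "J *v (J *v z) = J *v z" for z by (rule JF(1))
  have LJ: "laplacian A *v (J *v z) = 0" for z by (rule JF(2))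
  have JL: "J *v (laplacian A *v z) = 0" for z by (rule JF(3))
  have R2: "\<And>u. laplacian A *v u = 0 \<Longrightarrow> J *v u = 0 \<Longrightarrow> u = 0" using JF(4) by blast
  define K where "K = mat 1 - \<epsilon> *\<^sub>R laplacian A - J"
  have Kv: "K *v y = y - \<epsilon> *\<^sub>R (laplacian A *v y) - J *v y" for y
    by (simp add: K_def matrix_vector_mult_diff_rdistrib scaleR_matrix_vector_assoc[symmetric])
  have JK: "J ** K = 0"
    unfolding matrix_eq
  proof
    fix y
    have "(J ** K) *v y = J *v (K *v y)" by (simp add: matrix_vector_mul_assoc)
    also have "\<dots> = 0" by (simp add: Kv matrix_vector_mult_diff_distrib matrix_vector_mult_scaleR JL JJ)
    finally show "(J ** K) *v y = 0 *v y" by simp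
  qed
  have evb: "cmod \<mu> < 1" if "\<And>i. (\<Sum>j\<in>UNIV. of_real (K$i$j) * z j) = \<mu> * z i" "\<exists>i. z i \<noteq> 0"
    for \<mu> z
    using that(2) eig_bound[OF nonneg eps0 eps2 K_def JK R2 that(1)] by blast
  obtain B r where Br: "0 < r" "r < 1" "0 \<le> B" "\<And>k y. norm (mat_pow K k *v y) \<le> B * r^k * norm y"
    using decay[of K] evb by blast
  have SSm: "S ** S = S" and rS: "mat_range S = span (mat_range (laplacian A) \<union> {ones})"
    using S_proj unfolding is_orth_proj_def by auto
  have SS_S: "S *v (S *v z) = S *v z" for z by (simp add: matrix_vector_mul_assoc SSm)
  have SL: "S *v (laplacian A *v z) = laplacian A *v z" for z
  proof -
    have "laplacian A *v z \<in> mat_range (laplacian A)" by (simp add: mat_range_def)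
    then have "laplacian A *v z \<in> mat_range S" unfolding rS by (simp add: span_base)
    then obtain w where "laplacian A *v z = S *v w" by (auto simp: mat_range_def)
    then show ?thesis by (simp add: SS_S)
  qed
  have Lt: "((1/\<tau>) *\<^sub>R (mat 1 - S) + laplacian A ** S) *v y = (1/\<tau>) *\<^sub>R (y - S *v y) + laplacian A *v (S *v y)" for y
    by (simp add: matrix_vector_mult_add_rdistrib scaleR_matrix_vector_assoc[symmetric]
        matrix_vector_mult_diff_rdistrib matrix_vector_mul_assoc)
  define xd where "xd t = - ((1/\<tau>) *\<^sub>R (x t - S *v x t) + laplacian A *v (S *v x t))" for t
  have dx: "(x has_vector_derivative xd t) (at t within {0..})" if "t \<ge> 0" for t
    using ode[OF that] by (simp add: Lt xd_def)
  define v where "v t = S *v x t" for t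
  have dv: "(v has_vector_derivative (- (laplacian A *v v t))) (at t within {0..})" if "t \<ge> 0" for t
  proof -
    have "(v has_vector_derivative S *v xd t) (at t within {0..})"
      unfolding v_def by (rule bounded_linear.has_vector_derivative[OF matrix_vector_mul_bounded_linear dx[OF that]])
    moreover have "S *v xd t = - (laplacian A *v v t)"
      by (simp add: xd_def v_def matrix_vector_right_distrib matrix_vector_mult_scaleR
          matrix_vector_mult_diff_distrib SS_S SL mv_neg)
    ultimately show ?thesis by simp
  qed
  define u where "u t = x t - v t" for t
  have du: "(u has_vector_derivative (- (1/\<tau>) *\<^sub>R u t)) (at t within {0..})" if "t \<ge> 0" for t
  proof -
    have "(u has_vector_derivative (xd t - (- (laplacian A *v v t)))) (at t within {0..})"
      unfolding u_def by (rule has_vector_derivative_diff[OF dx[OF that] dv[OF that]])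
    moreover have "xd t - (- (laplacian A *v v t)) = - (1/\<tau>) *\<^sub>R u t"
      using tau_pos by (simp add: xd_def u_def v_def)
    ultimately show ?thesis by simp
  qed
  define gu where "gu t = exp (t/\<tau>) *\<^sub>R u t" for t
  have dgu: "(gu has_vector_derivative 0) (at t within {0..})" if "t \<ge> 0" for t
  proof -
    have "((\<lambda>s. exp (s/\<tau>)) has_field_derivative exp (t/\<tau>) * (1/\<tau>)) (at t within {0..})"
      using tau_pos by (auto intro!: derivative_eq_intros)
    from has_vector_derivative_scaleR[OF this du[OF that]]
    show ?thesis unfolding gu_def by (simp add: algebra_simps)
  qed
  obtain cu where cu: "\<And>t. t \<in> {0..} \<Longrightarrow> gu t = cu"
    using has_vector_derivative_zero_constant[of "{0..}" gu] dgu by auto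
  have ueq: "u t = exp (-((1/\<tau>) * t)) *\<^sub>R u 0" if "t \<ge> 0" for t
  proof -
    have "gu t = gu 0" using cu that by simp
    then have "exp (t/\<tau>) *\<^sub>R u t = u 0" by (simp add: gu_def)
    then have e: "exp (-(t/\<tau>)) *\<^sub>R (exp (t/\<tau>) *\<^sub>R u t) = exp (-(t/\<tau>)) *\<^sub>R u 0" by simp
    have "exp (-(t/\<tau>)) * exp (t/\<tau>) = 1" by (simp add: exp_minus_inverse mult.commute)
    then have "exp (-(t/\<tau>)) *\<^sub>R (exp (t/\<tau>) *\<^sub>R u t) = u t" by (simp only: scaleR_scaleR scaleR_one)
    with e have "u t = exp (-(t/\<tau>)) *\<^sub>R u 0" by simp
    moreover have "-((1/\<tau>) * t) = -(t/\<tau>)" by simp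
    ultimately show ?thesis by simp
  qed
  have ulim: "(u \<longlongrightarrow> 0) at_top"
  proof -
    have "((\<lambda>t. exp (-((1/\<tau>) * t)) *\<^sub>R u 0) \<longlongrightarrow> 0 *\<^sub>R u 0) at_top"
      by (intro tendsto_scaleR tendsto_const exp_decay_tendsto) (simp add: tau_pos)
    then have "((\<lambda>t. exp (-((1/\<tau>) * t)) *\<^sub>R u 0) \<longlongrightarrow> 0) at_top" by simp
    moreover have "eventually (\<lambda>t. exp (-((1/\<tau>) * t)) *\<^sub>R u 0 = u t) at_top"
      using eventually_ge_at_top[of 0] by eventually_elim (rule ueq[symmetric])
    ultimately show ?thesis by (rule Lim_transform_eventually)
  qed
  define p where "p t = J *v v t" for t
  have dp: "(p has_vector_derivative 0) (at t within {0..})" if "t \<ge> 0" for t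
  proof -
    have "(p has_vector_derivative J *v (- (laplacian A *v v t))) (at t within {0..})"
      unfolding p_def by (rule bounded_linear.has_vector_derivative[OF matrix_vector_mul_bounded_linear dv[OF that]])
    moreover have "J *v (- (laplacian A *v v t)) = 0" by (simp add: mv_neg JL)
    ultimately show ?thesis by simp
  qed
  obtain cp where cp: "\<And>t. t \<in> {0..} \<Longrightarrow> p t = cp"
    using has_vector_derivative_zero_constant[of "{0..}" p] dp by auto
  have peq: "p t = (J ** S) *v x 0" if "t \<ge> 0" for t
    using cp[of t] cp[of 0] that by (simp add: p_def v_def matrix_vector_mul_assoc)
  define q where "q t = v t - p t" for t
  have dq: "(q has_vector_derivative ((1/\<epsilon>) *\<^sub>R (K *v q t - q t))) (at t)" if "t > 0" for t
  proof -
    have "(q has_vector_derivative (- (laplacian A *v v t) - 0)) (at t within {0..})"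
      unfolding q_def using that by (intro has_vector_derivative_diff dv dp) auto
    then have "(q has_vector_derivative (- (laplacian A *v v t))) (at t within {0..})" by simp
    then have "(q has_vector_derivative (- (laplacian A *v v t))) (at t within {0<..})"
      by (rule has_vector_derivative_within_subset) auto
    then have d1: "(q has_vector_derivative (- (laplacian A *v v t))) (at t)"
      using has_vector_derivative_within_open[of t "{0<..}"] that by auto
    have Jq: "J *v q t = 0" by (simp add: q_def p_def matrix_vector_mult_diff_distrib JJ)
    have Lq: "laplacian A *v q t = laplacian A *v v t"
      by (simp add: q_def p_def matrix_vector_mult_diff_distrib LJ)
    have "(1/\<epsilon>) *\<^sub>R (K *v q t - q t) = - (laplacian A *v v t)"
      using eps0 by (simp add: Kv Jq Lq)
    with d1 show ?thesis by simp
  qed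
  have qlim: "(q \<longlongrightarrow> 0) at_top"
    by (rule lyap_decay[OF eps0 Br(4) Br(1) Br(2) Br(3) dq])
  have "((\<lambda>t. u t + q t + (J ** S) *v x 0) \<longlongrightarrow> 0 + 0 + (J ** S) *v x 0) at_top"
    by (intro tendsto_add ulim qlim tendsto_const)
  then have lim: "((\<lambda>t. u t + q t + (J ** S) *v x 0) \<longlongrightarrow> (J ** S) *v x 0) at_top" by simp
  moreover have "eventually (\<lambda>t. u t + q t + (J ** S) *v x 0 = x t) at_top"
    using eventually_ge_at_top[of 0]
  proof eventually_elim
    case (elim t)
    then show ?case using peq[OF elim] by (simp add: u_def q_def)
  qed
  ultimately show ?thesis by (rule Lim_transform_eventually)
qed

end
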